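(* Let $\mathcal M$ be a valid catalytic machine, $x$ an input and $\tau$ an initial catalytic tape, and let $\langle\pi,u\rangle$ be any vertex of $\mathcal G_{\mathcal M,x,\tau}$. Then $\langle\pi,u\rangle\in V(\mathcal G^0_{\mathcal M,x}(\mathrm{acc}_\tau))\cup V(\mathcal G^0_{\mathcal M,x}(\mathrm{rej}_\tau))$.
   Context: A catalytic machine with work space $s$ and catalytic space $c$ has a read-only input tape holding $x$, a work tape of length $s$ initialized to $0^s$, a catalytic tape of length $c$ initialized to arbitrary $\tau$; non-deterministic/randomized machines have at each step a 0-choice and a 1-choice of transition (deterministic transitions count as both). It is valid if for every $x,\tau$ and every sequence of choices it halts in finite time with catalytic tape $\tau$. All auxiliary configuration information (state, head positions) is recorded on the work tape, so configurations are pairs $\langle\pi,u\rangle$ ($\pi\in\{0,1\}^c$ catalytic content, $u\in\{0,1\}^s$ work content); the start configuration is $\langle\tau,0^s\rangle$, the unique accepting halt configuration is $\mathrm{acc}_\tau=\langle\tau,1\,1\,0^{s-2}\rangle$ and the unique rejecting halt configuration is $\mathrm{rej}_\tau=\langle\tau,1\,0\,0^{s-2}\rangle$. The configuration graph $\mathcal G_{\mathcal M,x}$ has configurations as vertices and a directed edge $v\to v'$ when $v'$ is reachable from $v$ in one step, labeled by the choice bit(s). $\mathcal G_{\mathcal M,x,\tau}$ is the subgraph induced on configurations reachable from $\langle\tau,0^s\rangle$. The $0$-graph $\mathcal G^0_{\mathcal M,x}$ is the undirected graph retaining only edges labeled $0$ with directions forgotten, and $\mathcal G^0_{\mathcal M,x}(v)$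 is the connected component containing $v$. *)

theory Defs
  imports Main
begin

(* Configurations <pi, u>: pi = catalytic tape content, u = work tape content
   (the work tape also records state and head positions). *)
type_synonym conf = "bool list \<times> bool list"

(* A catalytic machine, abstracted to its configuration-level transition
   function: for input x and choice bit b, trans M x b v is the configuration
   reached from v in one step under choice b (deterministic transitions
   have trans M x False v = trans M x True v). *)
record cmachine =
  ws :: nat
  cs :: nat
  trans :: "bool list \<Rightarrow> bool \<Rightarrow> conf \<Rightarrow> conf"

definition configs :: "cmachine \<Rightarrow> conf set" where
  "configs M = {(p, u). length p = cs M \<and> length u = ws M}"

definition acc_work :: "cmachine \<Rightarrow> bool list" where
  "acc_work M = True # True # replicate (ws M - 2) False"

definition rej_work :: "cmachine \<Rightarrow> bool list" where
  "rej_work M = True # False # replicate (ws M - 2) False"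

definition halted :: "cmachine \<Rightarrow> conf \<Rightarrow> bool" where
  "halted M v \<longleftrightarrow> snd v = acc_work M \<or> snd v = rej_work M"

definition acc :: "cmachine \<Rightarrow> bool list \<Rightarrow> conf" where
  "acc M \<tau> = (\<tau>, acc_work M)"

definition rej :: "cmachine \<Rightarrow> bool list \<Rightarrow> conf" where
  "rej M \<tau> = (\<tau>, rej_work M)"

definition start :: "cmachine \<Rightarrow> bool list \<Rightarrow> conf" where
  "start M \<tau> = (\<tau>, replicate (ws M) False)"

fun run :: "cmachine \<Rightarrow> bool list \<Rightarrow> conf \<Rightarrow> (nat \<Rightarrow> bool) \<Rightarrow> nat \<Rightarrow> conf" where
  "run M x v ch 0 = v"
| "run M x v ch (Suc n) =
     (if halted M (run M x v ch n) then run M x v ch n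
      else trans M x (ch n) (run M x v ch n))"

definition wellformed :: "cmachine \<Rightarrow> bool" where
  "wellformed M \<longleftrightarrow> 2 \<le> ws M \<and>
     (\<forall>x b v. v \<in> configs M \<longrightarrow> trans M x b v \<in> configs M)"

definition valid :: "cmachine \<Rightarrow> bool" where
  "valid M \<longleftrightarrow> wellformed M \<and>
     (\<forall>x \<tau> ch. length \<tau> = cs M \<longrightarrow>
        (\<exists>n. halted M (run M x (start M \<tau>) ch n) \<and> fst (run M x (start M \<tau>) ch n) = \<tau>))"

definition edge :: "cmachine \<Rightarrow> bool list \<Rightarrow> bool \<Rightarrow> conf \<Rightarrow> conf \<Rightarrow> bool" where
  "edge M x b v v' \<longleftrightarrow> v \<in> configs M \<and> \<not> halted M v \<and> v' = trans M x b v"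

(* vertex set of G_{M,x,tau}: configurations reachable from <tau, 0^s> *)
definition reach_vertices :: "cmachine \<Rightarrow> bool list \<Rightarrow> bool list \<Rightarrow> conf set" where
  "reach_vertices M x \<tau> = {v. (\<lambda>a b. \<exists>c. edge M x c a b)\<^sup>*\<^sup>* (start M \<tau>) v}"

(* vertex set of the connected component of v in the undirected 0-graph G^0_{M,x} *)
definition comp0 :: "cmachine \<Rightarrow> bool list \<Rightarrow> conf \<Rightarrow> conf set" where
  "comp0 M x v = {w. w \<in> configs M \<and>
      (\<lambda>a b. edge M x False a b \<or> edge M x False b a)\<^sup>*\<^sup>* v w}"

end

theory Submission
  imports Defs
begin

lemma run_configs:
  assumes "wellformed M" "v \<in> configs M"
  shows "run M x v ch n \<in> configs M"
  using assms unfolding wellformed_def by (induction n) (simp_all, metis surj_pair)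

lemma run_stay:
  assumes "halted M (run M x v ch j)"
  shows "run M x v ch (j + d) = run M x v ch j"
  using assms by (induction d) auto

lemma reach_path:
  assumes "(\<lambda>a b. \<exists>c. edge M x c a b)\<^sup>*\<^sup>* v0 v"
  shows "\<exists>cs. \<forall>ch. (\<forall>i<length cs. ch i = cs!i) \<longrightarrow> run M x v0 ch (length cs) = v"
  using assms
proof (induction rule: rtranclp_induct)
  case base
  then show ?case by (rule exI[of _ "[]"]) auto
next
  case (step y z)
  then obtain cs where cs: "\<forall>ch. (\<forall>i<length cs. ch i = cs!i) \<longrightarrow> run M x v0 ch (length cs) = y"
    by blast
  from step(2) obtain c where e: "edge M x c y z" by blast
  show ?case
  proof (rule exI[of _ "cs @ [c]"], intro allI impI)
    fix ch assume h: "\<forall>i<length (cs @ [c]). ch i = (cs @ [c]) ! i"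
    then have "\<forall>i<length cs. ch i = cs!i" by (auto simp: nth_append)
    with cs have y: "run M x v0 ch (length cs) = y" by blast
    have "ch (length cs) = c" using h by auto
    then show "run M x v0 ch (length (cs @ [c])) = z"
      using y e by (auto simp: edge_def)
  qed
qed

lemma reach_configs:
  assumes "(\<lambda>a b. \<exists>c. edge M x c a b)\<^sup>*\<^sup>* v0 v" "v0 \<in> configs M" "wellformed M"
  shows "v \<in> configs M"
  using assms by (induction rule: rtranclp_induct) (auto simp: edge_def wellformed_def)

theorem lemma4p8:
  fixes M :: cmachine and x \<tau> :: "bool list" and p u :: "bool list"
  assumes "valid M"
    and "length \<tau> = cs M"
    and "(p, u) \<in> reach_vertices M x \<tau>"
  shows "(p, u) \<in> comp0 M x (acc M \<tau>) \<union> comp0 M x (rej M \<tau>)"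
proof -
  define v where "v = (p, u)"
  define R0 where "R0 = (\<lambda>a b. edge M x False a b \<or> edge M x False b a)"
  have wf: "wellformed M" using assms(1) by (simp add: valid_def)
  have sc: "start M \<tau> \<in> configs M" using assms(2) by (simp add: start_def configs_def)
  have rv: "(\<lambda>a b. \<exists>c. edge M x c a b)\<^sup>*\<^sup>* (start M \<tau>) v"
    using assms(3) by (simp add: reach_vertices_def v_def)
  have vc: "v \<in> configs M" using reach_configs[OF rv sc wf] .
  obtain cs where cs: "\<forall>ch. (\<forall>i<length cs. ch i = cs!i) \<longrightarrow> run M x (start M \<tau>) ch (length cs) = v"
    using reach_path[OF rv] by blast
  define ch where "ch = (\<lambda>i. if i < length cs then cs!i else False)"
  define k where "k = length cs"
  have rk: "run M x (start M \<tau>) ch k = v" using cs by (simp add: ch_def k_def)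
  have fw: "R0\<^sup>*\<^sup>* v (run M x (start M \<tau>) ch (k + m))" for m
  proof (induction m)
    case 0 then show ?case using rk by simp
  next
    case (Suc m)
    let ?r = "run M x (start M \<tau>) ch (k + m)"
    have rc: "?r \<in> configs M" using run_configs[OF wf sc] .
    have chf: "ch (k + m) = False" by (simp add: ch_def k_def)
    show ?case
    proof (cases "halted M ?r")
      case True then show ?thesis using Suc by simp
    next
      case False
      then have "R0 ?r (run M x (start M \<tau>) ch (k + Suc m))"
        using rc chf by (simp add: R0_def edge_def)
      then show ?thesis using Suc by (meson rtranclp.rtrancl_into_rtrancl)
    qed
  qed
  obtain n where n: "halted M (run M x (start M \<tau>) ch n)" "fst (run M x (start M \<tau>) ch n) = \<tau>"
    using assms(1,2) unfolding valid_def by blast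
  obtain m where hm: "run M x (start M \<tau>) ch (k + m) = run M x (start M \<tau>) ch n"
  proof (cases "n \<le> k")
    case True
    then have "run M x (start M \<tau>) ch (n + (k - n)) = run M x (start M \<tau>) ch n"
      using run_stay[OF n(1)] by blast
    then show ?thesis using True that[of 0] by simp
  next
    case False then show ?thesis using that[of "n - k"] by simp
  qed
  define h where "h = run M x (start M \<tau>) ch n"
  have p1: "R0\<^sup>*\<^sup>* v h" using fw[of m] hm h_def by simp
  have "symp R0" by (auto simp: R0_def symp_def)
  then have p2: "R0\<^sup>*\<^sup>* h v" using p1 by (meson sympD symp_rtranclp)
  have "h = acc M \<tau> \<or> h = rej M \<tau>"
    using n unfolding h_def halted_def acc_def rej_def by (cases "run M x (start M \<tau>) ch n") auto
  then show ?thesis using p2 vc unfolding v_def comp0_def R0_def by auto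
qed

end
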